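(* Let $\mathcal G=(E,\mathcal I)$ be a matroid, $c:E\to\mathbb R_{\ge0}$, $U\subseteq E$, $q\in\mathbb N$, and let $B$ be a minimum basis of $[\mathcal G\cap U]_{\le q}$ with respect to $c$. Let $\Delta\in\mathcal I$ with $|\Delta|\le q$, and let $a\in(\Delta\cap U)\setminus B$. Then there is $b\in B\setminus\Delta$ such that $\Delta-a+b\in\mathcal I$ and $c(b)\le c(a)$.
   Context: For a matroid $\mathcal G=(E,\mathcal I)$, $U\subseteq E$ and $q\in\mathbb N$, $[\mathcal G\cap U]_{\le q}$ denotes the matroid with ground set $U$ and independent sets $\{A\in\mathcal I: A\subseteq U,\ |A|\le q\}$. A basis is a maximal independent set; a minimum basis w.r.t. $c$ is a basis $B$ with $\sum_{e\in B}c(e)\le\sum_{e\in B'}c(e)$ for every basis $B'$. $A+e=A\cup\{e\}$, $A-e=A\setminus\{e\}$. *)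

theory Defs
  imports Complex_Main
begin

definition matroid :: "'a set \<Rightarrow> 'a set set \<Rightarrow> bool" where
  "matroid E I \<longleftrightarrow> finite E \<and> (\<forall>A\<in>I. A \<subseteq> E) \<and> {} \<in> I
     \<and> (\<forall>A B. B \<in> I \<longrightarrow> A \<subseteq> B \<longrightarrow> A \<in> I)
     \<and> (\<forall>A B. A \<in> I \<longrightarrow> B \<in> I \<longrightarrow> card A < card B \<longrightarrow> (\<exists>e\<in>B - A. insert e A \<in> I))"

definition restr_trunc :: "'a set set \<Rightarrow> 'a set \<Rightarrow> nat \<Rightarrow> 'a set set" where
  "restr_trunc I U q = {A \<in> I. A \<subseteq> U \<and> card A \<le> q}"

definition basis :: "'a set set \<Rightarrow> 'a set \<Rightarrow> bool" where
  "basis I B \<longleftrightarrow> B \<in> I \<and> (\<forall>A\<in>I. B \<subseteq> A \<longrightarrow> A = B)"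

definition min_basis :: "'a set set \<Rightarrow> ('a \<Rightarrow> real) \<Rightarrow> 'a set \<Rightarrow> bool" where
  "min_basis I c B \<longleftrightarrow> basis I B \<and> (\<forall>B'. basis I B' \<longrightarrow> (\<Sum>e\<in>B. c e) \<le> (\<Sum>e\<in>B'. c e))"

end

theory Submission
  imports Defs
begin

lemma mfin: "matroid E I \<Longrightarrow> A \<in> I \<Longrightarrow> finite A"
  unfolding matroid_def by (meson finite_subset)

lemma msub: "matroid E I \<Longrightarrow> A \<in> I \<Longrightarrow> X \<subseteq> A \<Longrightarrow> X \<in> I"
  unfolding matroid_def by blast

lemma maug: "matroid E I \<Longrightarrow> A \<in> I \<Longrightarrow> B \<in> I \<Longrightarrow> card A < card B \<Longrightarrow> \<exists>e\<in>B-A. insert e A \<in> I"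
  unfolding matroid_def by blast

lemma mext:
  assumes "X \<in> I" "X \<subseteq> S" "finite S"
  shows "\<exists>Z. Z \<in> I \<and> X \<subseteq> Z \<and> Z \<subseteq> S \<and> (\<forall>e\<in>S-Z. insert e Z \<notin> I)"
proof -
  define F where "F = {Z. Z \<in> I \<and> X \<subseteq> Z \<and> Z \<subseteq> S}"
  have fF: "finite F" unfolding F_def using assms(3)
    by (rule finite_subset[rotated, OF finite_Pow_iff[THEN iffD2]]) auto
  have "X \<in> F" using assms unfolding F_def by auto
  define m where "m = Max (card ` F)"
  have "m \<in> card ` F" unfolding m_def using fF \<open>X \<in> F\<close> by (intro Max_in) auto
  then obtain Z where Z: "Z \<in> F" "card Z = m" by auto
  have "\<forall>e\<in>S-Z. insert e Z \<notin> I"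
  proof (intro ballI notI)
    fix e assume e: "e \<in> S - Z" "insert e Z \<in> I"
    then have "insert e Z \<in> F" using Z unfolding F_def by auto
    then have "card (insert e Z) \<le> m" unfolding m_def using fF by auto
    moreover have "finite Z" using Z assms(3) unfolding F_def by (auto intro: finite_subset)
    ultimately show False using e Z by simp
  qed
  then show ?thesis using Z unfolding F_def by auto
qed

theorem mainTheorem11:
  fixes E :: "'a set" and I :: "'a set set" and c :: "'a \<Rightarrow> real"
    and U :: "'a set" and q :: nat and B \<Delta> :: "'a set" and a :: 'a
  assumes "matroid E I"
    and "\<forall>e\<in>E. c e \<ge> 0"
    and "U \<subseteq> E"
    and "min_basis (restr_trunc I U q) c B"
    and "\<Delta> \<in> I" and "card \<Delta> \<le> q"
    and "a \<in> (\<Delta> \<inter> U) - B"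
  shows "\<exists>b\<in>B - \<Delta>. insert b (\<Delta> - {a}) \<in> I \<and> c b \<le> c a"
proof -
  note M = assms(1)
  have BI: "B \<in> I" "B \<subseteq> U" "card B \<le> q"
    using assms(4) unfolding min_basis_def basis_def restr_trunc_def by auto
  have Bmax: "\<And>A. A \<in> restr_trunc I U q \<Longrightarrow> B \<subseteq> A \<Longrightarrow> A = B"
    using assms(4) unfolding min_basis_def basis_def by auto
  have Bmin: "\<And>B'. basis (restr_trunc I U q) B' \<Longrightarrow> (\<Sum>e\<in>B. c e) \<le> (\<Sum>e\<in>B'. c e)"
    using assms(4) unfolding min_basis_def by auto
  have fB: "finite B" using mfin[OF M BI(1)] .
  have aU: "a \<in> U" "a \<notin> B" "a \<in> \<Delta>" using assms(7) by auto
  define D where "D = \<Delta> - {a}"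
  have DI: "D \<in> I" using msub[OF M assms(5)] D_def by auto
  have fD: "finite \<Delta>" using mfin[OF M assms(5)] .
  have cD: "card \<Delta> = card D + 1" using fD aU D_def
    by (metis Suc_eq_plus1 card_Suc_Diff1)
  have aBnot: "insert a B \<notin> restr_trunc I U q"
    using Bmax[of "insert a B"] aU by auto
  have key: "\<exists>b\<in>B-\<Delta>. insert b D \<in> I \<and> insert a (B-{b}) \<in> I"
  proof (cases "insert a B \<in> I")
    case True
    then have "card B = q" using aBnot BI aU fB unfolding restr_trunc_def by auto
    then have "card D < card B" using cD assms(6) by simp
    then obtain b where b: "b \<in> B - D" "insert b D \<in> I" using maug[OF M DI BI(1)] by auto
    have "b \<notin> \<Delta>" using b aU D_def by auto
    moreover have "insert a (B-{b}) \<in> I" using msub[OF M True, of "insert a (B-{b})"] by auto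
    ultimately show ?thesis using b by auto
  next
    case False
    define P where "P n = (\<exists>K\<subseteq>B. insert a K \<notin> I \<and> card K = n)" for n
    have "P (card B)" using False P_def by auto
    then have "P (LEAST n. P n)" by (rule LeastI)
    then obtain K where K: "K \<subseteq> B" "insert a K \<notin> I" "card K = (LEAST n. P n)"
      using P_def by auto
    have fK: "finite K" using K fB finite_subset by auto
    have Kmin: "\<And>K'. K' \<subseteq> B \<Longrightarrow> card K' < card K \<Longrightarrow> insert a K' \<in> I"
    proof -
      fix K' assume K'0: "K' \<subseteq> B" "card K' < card K"
      show "insert a K' \<in> I"
      proof (rule ccontr)
      assume "insert a K' \<notin> I"
      then have K': "K' \<subseteq> B" "card K' < card K" "insert a K' \<notin> I" using K'0 by auto
      then have "P (card K')" unfolding P_def by auto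
      moreover have "\<not> P (card K')" using not_less_Least[of "card K'" P] K'(2) K(3) by simp
      ultimately show False by simp
      qed
    qed
    have exch: "insert a (B-{b}) \<in> I" if bK: "b \<in> K" for b
    proof -
      have s1: "K - {b} \<subseteq> B" using K(1) by auto
      have s2: "card (K-{b}) < card K" using fK bK by (rule card_Diff1_less)
      have X: "insert a (K-{b}) \<in> I" using Kmin[OF s1 s2] .
      have "insert a (K-{b}) \<subseteq> insert a B" using K by auto
      then obtain Z where Z: "Z \<in> I" "insert a (K-{b}) \<subseteq> Z" "Z \<subseteq> insert a B"
        "\<forall>e\<in>insert a B - Z. insert e Z \<notin> I"
        using mext[OF X] fB by blast
      have "b \<notin> Z"
      proof
        assume "b \<in> Z"
        then have "insert a K \<subseteq> Z" using Z(2) by auto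
        then show False using msub[OF M Z(1)] K(2) by auto
      qed
      then have Zs: "Z \<subseteq> insert a (B-{b})" using Z(3) by auto
      have "\<not> card Z < card B"
      proof
        assume "card Z < card B"
        then obtain e where "e \<in> B - Z" "insert e Z \<in> I" using maug[OF M Z(1) BI(1)] by auto
        then show False using Z(4) by auto
      qed
      moreover have "card (insert a (B-{b})) = card B"
      proof -
        have "b \<in> B" using bK K(1) by auto
        then show ?thesis using fB aU by (simp add: card_Diff1_le) (metis Suc_pred card_gt_0_iff empty_iff)
      qed
      moreover have fin2: "finite (insert a (B-{b}))" using fB by simp
      moreover have "card Z \<le> card (insert a (B-{b}))" using card_mono[OF fin2 Zs] .
      ultimately have "card Z = card (insert a (B-{b}))" by linarith
      then have "Z = insert a (B-{b})" using card_subset_eq[OF fin2 Zs] by simp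
      then show ?thesis using Z(1) by simp
    qed
    show ?thesis
    proof (rule ccontr)
      assume H0: "\<not> ?thesis"
      have H: "\<And>b. b \<in> K \<Longrightarrow> b \<notin> \<Delta> \<Longrightarrow> insert b D \<notin> I"
        using H0 exch K(1) by blast
      have KI: "K \<in> I" using msub[OF M BI(1) K(1)] .
      obtain Z where Z: "Z \<in> I" "K \<subseteq> Z" "Z \<subseteq> K \<union> D" "\<forall>e\<in>(K \<union> D) - Z. insert e Z \<notin> I"
        using mext[OF KI, of "K \<union> D"] fK fD D_def by auto
      have "\<not> card D < card Z"
      proof
        assume "card D < card Z"
        then obtain z where z: "z \<in> Z - D" "insert z D \<in> I" using maug[OF M DI Z(1)] by auto
        then have "z \<in> K" using Z(3) by auto
        moreover have "z \<notin> \<Delta>" using z \<open>z \<in> K\<close> K(1) aU D_def by auto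
        ultimately show False using H z by auto
      qed
      then have "card Z < card \<Delta>" using cD by simp
      then obtain e where e: "e \<in> \<Delta> - Z" "insert e Z \<in> I" using maug[OF M Z(1) assms(5)] by auto
      show False
      proof (cases "e = a")
        case True
        then have "insert a K \<subseteq> insert e Z" using Z(2) by auto
        then show False using msub[OF M e(2)] K(2) by auto
      next
        case False
        then have "e \<in> D" using e D_def by auto
        then show False using Z(4) e by auto
      qed
    qed
  qed
  then obtain b where b: "b \<in> B - \<Delta>" "insert b D \<in> I" "insert a (B-{b}) \<in> I" by auto
  define X where "X = insert a (B-{b})"
  have cX: "card X = card B" unfolding X_def using fB b aU by simp (metis Suc_pred card_gt_0_iff empty_iff)
  have XI: "X \<in> restr_trunc I U q"
    using b(3) BI aU cX unfolding X_def restr_trunc_def by auto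
  have "basis (restr_trunc I U q) X"
    unfolding basis_def
  proof (intro conjI ballI impI XI)
    fix Y assume Y: "Y \<in> restr_trunc I U q" "X \<subseteq> Y"
    show "Y = X"
    proof (rule ccontr)
      assume "Y \<noteq> X"
      have YI: "Y \<in> I" "Y \<subseteq> U" "card Y \<le> q" using Y unfolding restr_trunc_def by auto
      have "finite Y" using mfin[OF M YI(1)] .
      then have "card X < card Y" using Y(2) \<open>Y \<noteq> X\<close> by (intro psubset_card_mono) auto
      then obtain e where e: "e \<in> Y - B" "insert e B \<in> I" using maug[OF M BI(1) YI(1)] cX by auto
      have "card (insert e B) \<le> q" using e fB \<open>card X < card Y\<close> cX YI by simp
      then have "insert e B \<in> restr_trunc I U q" using e YI BI unfolding restr_trunc_def by auto
      then have "insert e B = B" using Bmax by auto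
      then show False using e by auto
    qed
  qed
  then have "(\<Sum>e\<in>B. c e) \<le> (\<Sum>e\<in>X. c e)" by (rule Bmin)
  also have "(\<Sum>e\<in>X. c e) = c a + (\<Sum>e\<in>B. c e) - c b"
    unfolding X_def using fB b aU by (simp add: sum_diff1)
  finally have "c b \<le> c a" by simp
  then show ?thesis using b D_def by auto
qed

end
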